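(* For $n\ge 2$, the number of shallow Grassmannian permutations in $S_n$ (shallow permutations with at most one descent) equals $\binom{n+1}{3}+1$.
   Context: For $\pi\in S_n$: $D(\pi)=\sum_{i}|\pi_i-i|$, $I(\pi)$ is the number of inversions, $T(\pi)=n-\mathrm{cyc}(\pi)$ with $\mathrm{cyc}$ the number of cycles in the disjoint cycle decomposition; $\pi$ is shallow if $I(\pi)+T(\pi)=D(\pi)$. A descent of $\pi$ is an index $i\in[n-1]$ with $\pi_i>\pi_{i+1}$; a permutation is Grassmannian if it has at most one descent. *)

theory Defs
  imports "HOL-Combinatorics.Combinatorics"
begin

text \<open>Permutations of [n] = {1..n} are functions p :: nat => nat with p permutes {1..n}.\<close>

definition total_displacement :: "nat \<Rightarrow> (nat \<Rightarrow> nat) \<Rightarrow> nat" where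
  "total_displacement n p = (\<Sum>i\<in>{1..n}. nat \<bar>int (p i) - int i\<bar>)"

definition inversions :: "nat \<Rightarrow> (nat \<Rightarrow> nat) \<Rightarrow> nat" where
  "inversions n p = card {(i, j). i \<in> {1..n} \<and> j \<in> {1..n} \<and> i < j \<and> p i > p j}"

text \<open>Number of cycles in the disjoint cycle decomposition (fixed points count as cycles).\<close>
definition num_cycles :: "nat \<Rightarrow> (nat \<Rightarrow> nat) \<Rightarrow> nat" where
  "num_cycles n p = card (orbit p ` {1..n})"

definition reflection_length :: "nat \<Rightarrow> (nat \<Rightarrow> nat) \<Rightarrow> nat" where
  "reflection_length n p = n - num_cycles n p"

definition shallow :: "nat \<Rightarrow> (nat \<Rightarrow> nat) \<Rightarrow> bool" where
  "shallow n p \<longleftrightarrow> inversions n p + reflection_length n p = total_displacement n p"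

definition descents :: "nat \<Rightarrow> (nat \<Rightarrow> nat) \<Rightarrow> nat set" where
  "descents n p = {i. 1 \<le> i \<and> i \<le> n - 1 \<and> p i > p (Suc i)}"

definition grassmannian :: "nat \<Rightarrow> (nat \<Rightarrow> nat) \<Rightarrow> bool" where
  "grassmannian n p \<longleftrightarrow> card (descents n p) \<le> 1"

end

theory Submission
  imports Defs
begin


lemma Lle:
  assumes perm: "p permutes {1..n}" and v: "v \<le> n"
  shows "card {l\<in>{1..n}. p l \<le> v} = v"
proof -
  have inj: "inj_on p {l\<in>{1..n}. p l \<le> v}"
    using permutes_inj[OF perm] by (auto intro: inj_on_subset)
  have img: "p ` {l\<in>{1..n}. p l \<le> v} = {1..v}"
  proof
    show "p ` {l\<in>{1..n}. p l \<le> v} \<subseteq> {1..v}"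
    proof
      fix y assume "y \<in> p ` {l\<in>{1..n}. p l \<le> v}"
      then obtain l where l: "l \<in> {1..n}" "p l \<le> v" "y = p l" by blast
      have "p l \<in> {1..n}" using l(1) permutes_in_image[OF perm] by blast
      then show "y \<in> {1..v}" using l by simp
    qed
    show "{1..v} \<subseteq> p ` {l\<in>{1..n}. p l \<le> v}"
    proof
      fix y assume y: "y \<in> {1..v}"
      then have "y \<in> {1..n}" using v by auto
      then have "y \<in> p ` {1..n}" using permutes_image[OF perm] by simp
      then obtain l where "l \<in> {1..n}" "p l = y" by blast
      then show "y \<in> p ` {l\<in>{1..n}. p l \<le> v}" using y by auto
    qed
  qed
  have "card {l\<in>{1..n}. p l \<le> v} = card (p ` {l\<in>{1..n}. p l \<le> v})"
    using card_image[OF inj] by simp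
  then show ?thesis using img by simp
qed

lemma Lgt:
  assumes perm: "p permutes {1..n}" and v: "v \<le> n"
  shows "card {l\<in>{1..n}. v < p l} = n - v"
proof -
  have "{l\<in>{1..n}. v < p l} = {1..n} - {l\<in>{1..n}. p l \<le> v}" by auto
  moreover have "card ({1..n} - {l\<in>{1..n}. p l \<le> v}) = n - card {l\<in>{1..n}. p l \<le> v}"
    by (subst card_Diff_subset) auto
  ultimately show ?thesis using Lle[OF assms] by simp
qed

definition Inv :: "nat \<Rightarrow> (nat \<Rightarrow> nat) \<Rightarrow> (nat \<times> nat) set" where
  "Inv n p = {(i, j). i \<in> {1..n} \<and> j \<in> {1..n} \<and> i < j \<and> p i > p j}"

definition Rest :: "nat \<Rightarrow> nat \<Rightarrow> (nat \<Rightarrow> nat) \<Rightarrow> (nat \<times> nat) set" where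
  "Rest n k p = {(i, j). i \<in> {1..n} \<and> j \<in> {1..n} \<and> i < j \<and> p i > p j \<and> i < k \<and> Suc k < j}"

definition sig :: "nat \<Rightarrow> nat \<Rightarrow> nat \<Rightarrow> nat \<Rightarrow> nat" where
  "sig x d c i = (if i < x \<or> c < i then i else if i < d then Suc i else if i = d then c
                  else if i = Suc d then x else i - 1)"

locale gr =
  fixes n k :: nat and p :: "nat \<Rightarrow> nat"
  assumes perm: "p permutes {1..n}" and kn: "k \<le> n"
  and H: "\<And>i. 1 \<le> i \<Longrightarrow> i < n \<Longrightarrow> i \<noteq> k \<Longrightarrow> p i < p (Suc i)"
begin

lemma inj: "p i = p j \<Longrightarrow> i = j"
  using permutes_inj[OF perm] by (meson injD)

lemma rng: "i \<in> {1..n} \<Longrightarrow> p i \<in> {1..n}"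
  using permutes_in_image[OF perm, of i] by blast

lemma mono1: "1 \<le> i \<Longrightarrow> i < j \<Longrightarrow> j \<le> k \<Longrightarrow> p i < p j"
proof (induction j)
  case 0 then show ?case by simp
next
  case (Suc j)
  show ?case
  proof (cases "i = j")
    case True
    have "p j < p (Suc j)" by (rule H) (use Suc.prems kn True in auto)
    then show ?thesis using True by simp
  next
    case False
    then have "p i < p j" using Suc.IH Suc.prems by simp
    moreover have "p j < p (Suc j)" by (rule H) (use Suc.prems kn False in auto)
    ultimately show ?thesis by simp
  qed
qed

lemma mono2: "k < i \<Longrightarrow> i < j \<Longrightarrow> j \<le> n \<Longrightarrow> p i < p j"
proof (induction j)
  case 0 then show ?case by simp
next
  case (Suc j)
  show ?case
  proof (cases "i = j")
    case True
    have "p j < p (Suc j)" by (rule H) (use Suc.prems kn True in auto)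
    then show ?thesis using True by simp
  next
    case False
    then have "p i < p j" using Suc.IH Suc.prems by simp
    moreover have "p j < p (Suc j)" by (rule H) (use Suc.prems kn False in auto)
    ultimately show ?thesis by simp
  qed
qed

lemma G1:
  assumes i: "1 \<le> i" "i \<le> k"
  shows "i \<le> p i" "card {j\<in>{1..n}. k < j \<and> p j < p i} = p i - i"
proof -
  have pi: "p i \<in> {1..n}" using rng i kn by auto
  have eq: "{l\<in>{1..n}. p l \<le> p i - 1} = {1..<i} \<union> {j\<in>{1..n}. k < j \<and> p j < p i}"
  proof (rule set_eqI, rule iffI)
    fix l assume l: "l \<in> {l\<in>{1..n}. p l \<le> p i - 1}"
    have "\<not> (i \<le> l \<and> l \<le> k)"
    proof
      assume "i \<le> l \<and> l \<le> k"
      then show False using l pi mono1[of i l] i by (cases "i = l") auto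
    qed
    then show "l \<in> {1..<i} \<union> {j\<in>{1..n}. k < j \<and> p j < p i}" using l pi by auto
  next
    fix l assume "l \<in> {1..<i} \<union> {j\<in>{1..n}. k < j \<and> p j < p i}"
    then show "l \<in> {l\<in>{1..n}. p l \<le> p i - 1}" using mono1[of l i] i kn by auto
  qed
  have "card {l\<in>{1..n}. p l \<le> p i - 1} = p i - 1" using Lle[OF perm, of "p i - 1"] pi by auto
  moreover have "card ({1..<i} \<union> {j\<in>{1..n}. k < j \<and> p j < p i}) = (i - 1) + card {j\<in>{1..n}. k < j \<and> p j < p i}"
    by (subst card_Un_disjoint) (use i in auto)
  ultimately have c: "p i - 1 = (i - 1) + card {j\<in>{1..n}. k < j \<and> p j < p i}" using eq by simp
  have "1 \<le> p i" "p i \<le> n" using pi by auto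
  then show "i \<le> p i" using i c by linarith
  show "card {j\<in>{1..n}. k < j \<and> p j < p i} = p i - i" using c i \<open>1 \<le> p i\<close> by linarith
qed

lemma G2:
  assumes j: "k < j" "j \<le> n"
  shows "p j \<le> j" "card {i\<in>{1..n}. i \<le> k \<and> p j < p i} = j - p j"
proof -
  have pj: "p j \<in> {1..n}" using rng j by auto
  have eq: "{l\<in>{1..n}. p j < p l} = {j<..n} \<union> {i\<in>{1..n}. i \<le> k \<and> p j < p i}"
  proof (rule set_eqI, rule iffI)
    fix l assume l: "l \<in> {l\<in>{1..n}. p j < p l}"
    have "\<not> (k < l \<and> l \<le> j)"
    proof
      assume "k < l \<and> l \<le> j"
      then show False using l pj mono2[of l j] j by (cases "j = l") auto
    qed
    then show "l \<in> {j<..n} \<union> {i\<in>{1..n}. i \<le> k \<and> p j < p i}" using l by auto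
  next
    fix l assume "l \<in> {j<..n} \<union> {i\<in>{1..n}. i \<le> k \<and> p j < p i}"
    then show "l \<in> {l\<in>{1..n}. p j < p l}" using mono2[of j l] j by auto
  qed
  have "card {l\<in>{1..n}. p j < p l} = n - p j" using Lgt[OF perm, of "p j"] pj by auto
  moreover have "card ({j<..n} \<union> {i\<in>{1..n}. i \<le> k \<and> p j < p i}) = (n - j) + card {i\<in>{1..n}. i \<le> k \<and> p j < p i}"
    by (subst card_Un_disjoint) (use j in auto)
  ultimately have c: "n - p j = (n - j) + card {i\<in>{1..n}. i \<le> k \<and> p j < p i}" using eq by simp
  have "1 \<le> p j" "p j \<le> n" using pj by auto
  then show "p j \<le> j" using j c by linarith
  show "card {i\<in>{1..n}. i \<le> k \<and> p j < p i} = j - p j" using c j \<open>p j \<le> n\<close> by linarith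
qed



lemma inv_shape: "(i,j) \<in> Inv n p \<Longrightarrow> i \<le> k \<and> k < j"
proof -
  assume a: "(i,j) \<in> Inv n p"
  then have ij: "1 \<le> i" "i < j" "j \<le> n" "p j < p i" by (auto simp: Inv_def)
  have "\<not> j \<le> k" using mono1[of i j] ij by auto
  moreover have "\<not> k < i" using mono2[of i j] ij by auto
  ultimately show ?thesis by auto
qed

lemma G3: "total_displacement n p = 2 * inversions n p"
proof -
  have e1: "Inv n p = Sigma {1..k} (\<lambda>i. {j\<in>{1..n}. k < j \<and> p j < p i})"
  proof (rule set_eqI, rule iffI)
    fix z assume z: "z \<in> Inv n p"
    obtain i j where zij: "z = (i,j)" by (cases z)
    then show "z \<in> Sigma {1..k} (\<lambda>i. {j\<in>{1..n}. k < j \<and> p j < p i})"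
      using z inv_shape[of i j] by (auto simp: Inv_def)
  next
    fix z assume "z \<in> Sigma {1..k} (\<lambda>i. {j\<in>{1..n}. k < j \<and> p j < p i})"
    then show "z \<in> Inv n p" using kn by (auto simp: Inv_def)
  qed
  have e2: "Inv n p = (\<lambda>(j,i). (i,j)) ` Sigma {k<..n} (\<lambda>j. {i\<in>{1..n}. i \<le> k \<and> p j < p i})"
  proof (rule set_eqI, rule iffI)
    fix z assume z: "z \<in> Inv n p"
    obtain i j where zij: "z = (i,j)" by (cases z)
    then have "(j,i) \<in> Sigma {k<..n} (\<lambda>j. {i\<in>{1..n}. i \<le> k \<and> p j < p i})"
      using z inv_shape[of i j] by (auto simp: Inv_def)
    then show "z \<in> (\<lambda>(j,i). (i,j)) ` Sigma {k<..n} (\<lambda>j. {i\<in>{1..n}. i \<le> k \<and> p j < p i})"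
      using zij by force
  next
    fix z assume "z \<in> (\<lambda>(j,i). (i,j)) ` Sigma {k<..n} (\<lambda>j. {i\<in>{1..n}. i \<le> k \<and> p j < p i})"
    then show "z \<in> Inv n p" using kn by (auto simp: Inv_def)
  qed
  have c1: "card (Inv n p) = (\<Sum>i\<in>{1..k}. p i - i)"
    unfolding e1
  proof (subst card_SigmaI)
    show "(\<Sum>a\<in>{1..k}. card {j \<in> {1..n}. k < j \<and> p j < p a}) = (\<Sum>i\<in>{1..k}. p i - i)"
    proof (rule sum.cong)
      fix i assume "i \<in> {1..k}"
      then show "card {j \<in> {1..n}. k < j \<and> p j < p i} = p i - i" using G1(2)[of i] by simp
    qed simp
  qed auto
  have "card (Inv n p) = card (Sigma {k<..n} (\<lambda>j. {i\<in>{1..n}. i \<le> k \<and> p j < p i}))"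
    unfolding e2 by (rule card_image) (auto simp: inj_on_def)
  also have "\<dots> = (\<Sum>j\<in>{k<..n}. card {i\<in>{1..n}. i \<le> k \<and> p j < p i})"
    by (rule card_SigmaI) auto
  also have "\<dots> = (\<Sum>j\<in>{k<..n}. j - p j)"
  proof (rule sum.cong)
    fix j assume "j \<in> {k<..n}"
    then show "card {i\<in>{1..n}. i \<le> k \<and> p j < p i} = j - p j" using G2(2)[of j] by simp
  qed simp
  finally have c2: "card (Inv n p) = (\<Sum>j\<in>{k<..n}. j - p j)" .
  have "{1..n} = {1..k} \<union> {k<..n}" using kn by auto
  then have "total_displacement n p = (\<Sum>i\<in>{1..k}. nat \<bar>int (p i) - int i\<bar>) + (\<Sum>i\<in>{k<..n}. nat \<bar>int (p i) - int i\<bar>)"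
    unfolding total_displacement_def by (simp only:) (rule sum.union_disjoint, auto)
  also have "(\<Sum>i\<in>{1..k}. nat \<bar>int (p i) - int i\<bar>) = (\<Sum>i\<in>{1..k}. p i - i)"
  proof (rule sum.cong)
    fix i assume "i \<in> {1..k}"
    then have "i \<le> p i" using G1(1)[of i] by auto
    then show "nat \<bar>int (p i) - int i\<bar> = p i - i" by simp
  qed simp
  also have "(\<Sum>i\<in>{k<..n}. nat \<bar>int (p i) - int i\<bar>) = (\<Sum>i\<in>{k<..n}. i - p i)"
  proof (rule sum.cong)
    fix i assume "i \<in> {k<..n}"
    then have "p i \<le> i" using G2(1)[of i] by auto
    then show "nat \<bar>int (p i) - int i\<bar> = i - p i" by simp
  qed simp
  finally show ?thesis using c1 c2 unfolding inversions_def Inv_def[symmetric] by simp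
qed


end

locale gr1 = gr +
  assumes k1: "1 \<le> k" and kn1: "k < n" and dk: "p (Suc k) < p k"
begin

lemma fixR: "j \<le> n \<Longrightarrow> p k < j \<Longrightarrow> p j = j"
proof -
  assume j: "j \<le> n" "p k < j"
  have ck: "k \<le> p k" using G1(1)[of k] k1 by simp
  then have kj: "k < j" using j by simp
  have le: "p j \<le> j" using G2(1)[of j] kj j by simp
  have sub: "{1..j-1} \<subseteq> {l\<in>{1..n}. p l \<le> j - 1}"
  proof
    fix l assume l: "l \<in> {1..j-1}"
    show "l \<in> {l\<in>{1..n}. p l \<le> j - 1}"
    proof (cases "l \<le> k")
      case True
      then have "p l \<le> p k" using mono1[of l k] l by (cases "l = k") auto
      then show ?thesis using l j by auto
    next
      case False
      then have "p l \<le> l" using G2(1)[of l] l j by auto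
      then show ?thesis using l j by auto
    qed
  qed
  show "p j = j"
  proof (rule ccontr)
    assume "p j \<noteq> j"
    then have "p j \<le> j - 1" using le by simp
    then have hs: "insert j {1..j-1} \<subseteq> {l\<in>{1..n}. p l \<le> j - 1}" using sub j kj k1 by auto
    have "card (insert j {1..j-1}) \<le> card {l\<in>{1..n}. p l \<le> j-1}" by (rule card_mono[OF _ hs]) simp
    moreover have "card {l\<in>{1..n}. p l \<le> j-1} = j - 1" using Lle[OF perm, of "j-1"] j by simp
    moreover have "card (insert j {1..j-1}) = j" using kj by simp
    ultimately show False using kj by simp
  qed
qed

lemma fixL: "1 \<le> i \<Longrightarrow> i < p (Suc k) \<Longrightarrow> p i = i"
proof -
  assume i: "1 \<le> i" "i < p (Suc k)"
  have "p (Suc k) \<le> Suc k" using G2(1)[of "Suc k"] kn1 by simp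
  then have ik: "i \<le> k" using i by simp
  have ge: "i \<le> p i" using G1(1)[of i] i ik by simp
  have sub: "{i<..n} \<subseteq> {l\<in>{1..n}. i < p l}"
  proof
    fix l assume l: "l \<in> {i<..n}"
    show "l \<in> {l\<in>{1..n}. i < p l}"
    proof (cases "l \<le> k")
      case True
      then have "l \<le> p l" using G1(1)[of l] l i by auto
      then show ?thesis using l i by auto
    next
      case False
      then have "p (Suc k) \<le> p l" using mono2[of "Suc k" l] l by (cases "l = Suc k") auto
      then show ?thesis using l i by auto
    qed
  qed
  show "p i = i"
  proof (rule ccontr)
    assume "p i \<noteq> i"
    then have "i < p i" using ge by simp
    then have hs: "insert i {i<..n} \<subseteq> {l\<in>{1..n}. i < p l}" using sub i ik kn1 by auto
    have "card (insert i {i<..n}) \<le> card {l\<in>{1..n}. i < p l}" by (rule card_mono[OF _ hs]) simp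
    moreover have "card {l\<in>{1..n}. i < p l} = n - i" using Lgt[OF perm, of i] ik kn1 by simp
    moreover have "card (insert i {i<..n}) = Suc (n - i)" by simp
    ultimately show False by simp
  qed
qed

lemma kc: "k < p k"
proof (rule ccontr)
  assume "\<not> k < p k"
  then have "p k \<le> k" by simp
  then have "p (Suc k) = Suc k" using fixR[of "Suc k"] kn1 by simp
  then show False using dk \<open>p k \<le> k\<close> by simp
qed

lemma xk: "p (Suc k) \<le> k"
proof (rule ccontr)
  assume "\<not> p (Suc k) \<le> k"
  then have "p k = k" using fixL[of k] k1 by simp
  then show False using dk \<open>\<not> p (Suc k) \<le> k\<close> by simp
qed

lemma x1: "1 \<le> p (Suc k)"
  using rng[of "Suc k"] kn1 by simp

lemma card_inv: "card (Inv n p) = (p k - p (Suc k)) + card (Rest n k p)"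
proof -
  define R where "R = (\<lambda>j. (k,j)) ` {j\<in>{1..n}. k < j \<and> p j < p k}"
  define C where "C = (\<lambda>i. (i, Suc k)) ` {i\<in>{1..n}. i \<le> k \<and> p (Suc k) < p i}"
  have "card R = card {j\<in>{1..n}. k < j \<and> p j < p k}" unfolding R_def
    by (rule card_image) (auto simp: inj_on_def)
  then have cR: "card R = p k - k" using G1(2)[of k] k1 by simp
  have "card C = card {i\<in>{1..n}. i \<le> k \<and> p (Suc k) < p i}" unfolding C_def
    by (rule card_image) (auto simp: inj_on_def)
  then have cC: "card C = Suc k - p (Suc k)" using G2(2)[of "Suc k"] kn1 by simp
  have RC: "R \<inter> C = {(k, Suc k)}" unfolding R_def C_def using k1 kn1 dk by auto
  have fin: "finite R" "finite C" unfolding R_def C_def by auto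
  have "card (R \<union> C) + card (R \<inter> C) = card R + card C" using card_Un_Int[OF fin] by simp
  then have cRC: "card (R \<union> C) = p k - p (Suc k)" using cR cC RC kc xk by simp
  have eq: "Inv n p = (R \<union> C) \<union> Rest n k p"
  proof (rule set_eqI, rule iffI)
    fix z assume z: "z \<in> Inv n p"
    obtain i j where zij: "z = (i,j)" by (cases z)
    have sh: "i \<le> k" "k < j" using inv_shape[of i j] z zij by auto
    have zz: "i \<in> {1..n}" "j \<in> {1..n}" "i < j" "p j < p i" using z zij by (auto simp: Inv_def)
    show "z \<in> (R \<union> C) \<union> Rest n k p"
    proof (cases "i = k")
      case True then have "z \<in> R" unfolding R_def using zij zz sh by auto
      then show ?thesis by simp
    next
      case False
      show ?thesis
      proof (cases "j = Suc k")
        case True then have "z \<in> C" unfolding C_def using zij zz sh by auto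
        then show ?thesis by simp
      next
        case False
        then have "z \<in> Rest n k p" using \<open>i \<noteq> k\<close> zij zz sh unfolding Rest_def by auto
        then show ?thesis by simp
      qed
    qed
  next
    fix z assume "z \<in> (R \<union> C) \<union> Rest n k p"
    then show "z \<in> Inv n p" unfolding R_def C_def Rest_def Inv_def using k1 kn1 by auto
  qed
  have dis: "(R \<union> C) \<inter> Rest n k p = {}" unfolding R_def C_def Rest_def by auto
  have finRest: "finite (Rest n k p)"
  proof (rule finite_subset)
    show "Rest n k p \<subseteq> {1..n} \<times> {1..n}" unfolding Rest_def by auto
  qed simp
  show ?thesis unfolding eq using cRC dis fin finRest by (simp add: card_Un_disjoint)
qed


lemma G7:
  assumes R0: "Rest n k p = {}"
  shows "p i = sig (p (Suc k)) k (p k) i"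
proof -
  define x where "x = p (Suc k)"
  define c where "c = p k"
  have xk': "x \<le> k" "1 \<le> x" using xk x1 x_def by auto
  have kc': "k < c" using kc c_def by simp
  have cn: "c \<le> n" using rng[of k] k1 kn1 c_def by auto
  have out: "p i = i" if "i \<notin> {1..n}" for i
    using permutes_not_in[OF perm that] .
  have noR: "\<not> (p l < p i)" if "1 \<le> i" "i < k" "Suc k < l" "l \<le> n" for i l
  proof
    assume "p l < p i"
    then have "(i,l) \<in> Rest n k p" unfolding Rest_def using that kn1 by auto
    then show False using R0 by simp
  qed
  show ?thesis
  proof (cases "i < x")
    case True
    then show ?thesis
      using fixL[of i] out[of i] x_def unfolding sig_def by (cases "i = 0") auto
  next
    case nx: False
    show ?thesis
    proof (cases "c < i")
      case True
      then show ?thesis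
        using fixR[of i] out[of i] c_def nx unfolding sig_def by (cases "i \<le> n") auto
    next
      case nc: False
      have i1: "1 \<le> i" "i \<le> n" using nx nc xk' cn by auto
      show ?thesis
      proof (cases "i < k")
        case True
        have S: "{l\<in>{1..n}. p l \<le> p i} = insert (Suc k) {1..i}"
        proof (rule set_eqI, rule iffI)
          fix l assume l: "l \<in> {l\<in>{1..n}. p l \<le> p i}"
          have "l \<le> i \<or> l = Suc k"
          proof (rule ccontr)
            assume "\<not> (l \<le> i \<or> l = Suc k)"
            then have il: "i < l" "l \<noteq> Suc k" by auto
            show False
            proof (cases "l \<le> k")
              case True then show False using mono1[of i l] il l i1 by auto
            next
              case False
              then have "Suc k < l" using il by simp
              moreover have "p l \<noteq> p i" using inj il by auto
              ultimately show False using noR[of i l] l i1 True by auto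
            qed
          qed
          then show "l \<in> insert (Suc k) {1..i}" using l by auto
        next
          fix l assume l: "l \<in> insert (Suc k) {1..i}"
          show "l \<in> {l\<in>{1..n}. p l \<le> p i}"
          proof (cases "l = Suc k")
            case True
            have "i \<le> p i" using G1(1)[of i] i1 True \<open>i < k\<close> by simp
            then show ?thesis using True kn1 xk' nx x_def by auto
          next
            case False
            then have "l \<le> i" "1 \<le> l" using l by auto
            then have "p l \<le> p i" using mono1[of l i] \<open>i < k\<close> by (cases "l = i") auto
            then show ?thesis using \<open>l \<le> i\<close> \<open>1 \<le> l\<close> i1 by auto
          qed
        qed
        have "card {l\<in>{1..n}. p l \<le> p i} = p i" using Lle[OF perm, of "p i"] rng[of i] i1 by auto
        moreover have "card (insert (Suc k) {1..i}) = Suc i" using True by simp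
        ultimately have "p i = Suc i" using S by simp
        then show ?thesis using True nx nc x_def c_def unfolding sig_def by simp
      next
        case nk: False
        show ?thesis
        proof (cases "i = k")
          case True then show ?thesis using c_def x_def unfolding sig_def using nx nc by simp
        next
          case nk2: False
          show ?thesis
          proof (cases "i = Suc k")
            case True then show ?thesis using x_def c_def nx nc nk nk2 unfolding sig_def by simp
          next
            case False
            then have ik: "Suc k < i" using nk nk2 by simp
            have S: "{l\<in>{1..n}. p l \<le> p i} = {1..i} - {k}"
            proof (rule set_eqI, rule iffI)
              fix l assume l: "l \<in> {l\<in>{1..n}. p l \<le> p i}"
              have "l \<le> i"
              proof (rule ccontr)
                assume "\<not> l \<le> i"
                then show False using mono2[of i l] l ik by auto
              qed
              moreover have "l \<noteq> k"
              proof
                assume lk: "l = k"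
                have "p i \<le> i" using G2(1)[of i] ik i1 by simp
                then have "p k \<le> p i" "p i \<le> p k" using l lk nc c_def by auto
                then have "p k = p i" by simp
                then show False using inj ik by force
              qed
              ultimately show "l \<in> {1..i} - {k}" using l by auto
            next
              fix l assume l: "l \<in> {1..i} - {k}"
              then have l1: "1 \<le> l" "l \<le> i" "l \<noteq> k" by auto
              have "p l \<le> p i"
              proof (cases "l < k")
                case True
                then show ?thesis using noR[of l i] l1 ik i1 by auto
              next
                case False
                then have "Suc k \<le> l" using l1 by simp
                then show ?thesis using mono2[of l i] l1 i1 by (cases "l = i") auto
              qed
              then show "l \<in> {l\<in>{1..n}. p l \<le> p i}" using l1 i1 by auto
            qed
            have "card {l\<in>{1..n}. p l \<le> p i} = p i" using Lle[OF perm, of "p i"] rng[of i] i1 by auto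
            moreover have "card ({1..i} - {k}) = i - 1" using ik k1 by simp
            ultimately have "p i = i - 1" using S by simp
            then show ?thesis using ik nx nc x_def c_def unfolding sig_def by simp
          qed
        qed
      qed
    qed
  qed
qed


lemma T_bound: "n - num_cycles n p \<le> p k - p (Suc k)"
proof -
  define x where "x = p (Suc k)"
  define c where "c = p k"
  have xk': "x \<le> k" "1 \<le> x" using xk x1 x_def by auto
  have kc': "k < c" using kc c_def by simp
  have cn: "c \<le> n" using rng[of k] k1 kn1 c_def by auto
  define F where "F = {1..n} - {x..c}"
  have fixF: "p i = i" if "i \<in> F" for i
  proof (cases "i < x")
    case True then show ?thesis using fixL[of i] that x_def F_def by auto
  next
    case False then show ?thesis using fixR[of i] that c_def F_def by auto
  qed
  have pm: "permutation p" using perm by (auto simp: permutation_permutes)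
  have kin: "k \<in> orbit p k" by (rule permutation_self_in_orbit[OF pm])
  have pkin: "p k \<in> orbit p k" by (rule orbit.base)
  have sub: "insert (orbit p k) ((\<lambda>i. {i}) ` F) \<subseteq> orbit p ` {1..n}"
  proof
    fix Q assume "Q \<in> insert (orbit p k) ((\<lambda>i. {i}) ` F)"
    then show "Q \<in> orbit p ` {1..n}"
    proof
      assume "Q = orbit p k" then show ?thesis using k1 kn1 by auto
    next
      assume "Q \<in> (\<lambda>i. {i}) ` F"
      then obtain i where i: "i \<in> F" "Q = {i}" by auto
      then have "orbit p i = {i}" using fixF orbit_eq_singleton_iff by metis
      then have "Q = orbit p i" using i by simp
      moreover have "i \<in> {1..n}" using i(1) F_def by simp
      ultimately show ?thesis by blast
    qed
  qed
  have notin: "orbit p k \<notin> (\<lambda>i. {i}) ` F"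
  proof
    assume "orbit p k \<in> (\<lambda>i. {i}) ` F"
    then obtain i where "orbit p k = {i}" by auto
    then show False using kin pkin kc by auto
  qed
  have cF: "card F = n - (Suc c - x)"
  proof -
    have "{x..c} \<subseteq> {1..n}" using xk' cn by auto
    then show ?thesis unfolding F_def by (simp add: card_Diff_subset)
  qed
  have "card (insert (orbit p k) ((\<lambda>i. {i}) ` F)) = Suc (card F)"
    using notin by (simp add: F_def card_image inj_on_def)
  moreover have "card (insert (orbit p k) ((\<lambda>i. {i}) ` F)) \<le> num_cycles n p"
    unfolding num_cycles_def by (rule card_mono) (use sub in auto)
  ultimately show ?thesis using cF xk' kc' cn c_def x_def by linarith
qed

end

lemma H_of_desc:
  assumes perm: "p permutes {1..n}" and d: "descents n p \<subseteq> {k}"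
  shows "\<And>i. 1 \<le> i \<Longrightarrow> i < n \<Longrightarrow> i \<noteq> k \<Longrightarrow> p i < p (Suc i)"
proof -
  fix i assume i: "1 \<le> i" "i < n" "i \<noteq> k"
  then have "i \<notin> descents n p" using d by auto
  then have "p i \<le> p (Suc i)" using i unfolding descents_def by auto
  moreover have "p i \<noteq> p (Suc i)" using permutes_inj[OF perm] by (metis injD n_not_Suc_n)
  ultimately show "p i < p (Suc i)" by simp
qed



context
  fixes n x d c :: nat
  assumes xd: "1 \<le> x" "x \<le> d" "d < c" "c \<le> n"
begin
lemma sig_inj: "inj_on (sig x d c) {1..n}"
  unfolding inj_on_def sig_def using xd by (auto split: if_splits)

lemma sig_rng: "i \<in> {1..n} \<Longrightarrow> sig x d c i \<in> {1..n}"
  unfolding sig_def using xd by (auto split: if_splits)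

lemma sig_desc: "descents n (sig x d c) = {d}"
  unfolding descents_def sig_def using xd by (auto split: if_splits)

lemma sig_rest: "Rest n d (sig x d c) = {}"
  unfolding Rest_def sig_def using xd by (auto split: if_splits)

lemma sig_perm: "sig x d c permutes {1..n}"
proof (rule bij_imp_permutes)
  have "sig x d c ` {1..n} \<subseteq> {1..n}" using sig_rng by blast
  then have "sig x d c ` {1..n} = {1..n}" using endo_inj_surj[OF _ _ sig_inj] by simp
  then show "bij_betw (sig x d c) {1..n} {1..n}" using sig_inj by (simp add: bij_betw_def)
next
  fix i assume "i \<notin> {1..n}"
  then show "sig x d c i = i" unfolding sig_def using xd by auto
qed
end


context
  fixes n x d c :: nat
  assumes xd: "1 \<le> x" "x \<le> d" "d < c" "c \<le> n"
begin

lemma sig_cyc: "num_cycles n (sig x d c) \<le> n - (c - x)"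
proof -
  let ?s = "sig x d c"
  have pm: "permutation ?s" using sig_perm[OF xd] by (auto simp: permutation_permutes)
  have up: "x + t \<in> orbit ?s x" if "x + t \<le> d" for t
    using that
  proof (induction t)
    case 0 then show ?case using permutation_self_in_orbit[OF pm] by simp
  next
    case (Suc t)
    then have m: "x + t \<in> orbit ?s x" by simp
    have e: "x + Suc t = ?s (x + t)" using Suc.prems xd unfolding sig_def by simp
    show ?case by (rule orbit_eqI(2)[OF e m])
  qed
  have cin: "c \<in> orbit ?s x"
  proof -
    have m: "d \<in> orbit ?s x" using up[of "d - x"] xd by simp
    have e: "c = ?s d" using xd unfolding sig_def by simp
    show ?thesis by (rule orbit_eqI(2)[OF e m])
  qed
  have down: "c - t \<in> orbit ?s x" if "d < c - t" for t
    using that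
  proof (induction t)
    case 0 then show ?case using cin by simp
  next
    case (Suc t)
    then have m: "c - t \<in> orbit ?s x" by simp
    have e: "c - Suc t = ?s (c - t)" using Suc.prems xd unfolding sig_def by (simp; arith)
    show ?case by (rule orbit_eqI(2)[OF e m])
  qed
  have allin: "i \<in> orbit ?s x" if "i \<in> {x..c}" for i
  proof (cases "i \<le> d")
    case True then show ?thesis using up[of "i - x"] that by simp
  next
    case False then show ?thesis using down[of "c - i"] that by simp
  qed
  have cyc: "cyclic_on ?s (orbit ?s x)" by (rule cyclic_on_orbit[OF sig_perm[OF xd]]) simp
  define F where "F = {1..n} - {x..c}"
  have sub: "orbit ?s ` {1..n} \<subseteq> insert (orbit ?s x) ((\<lambda>i. {i}) ` F)"
  proof
    fix Q assume "Q \<in> orbit ?s ` {1..n}"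
    then obtain i where i: "i \<in> {1..n}" "Q = orbit ?s i" by auto
    show "Q \<in> insert (orbit ?s x) ((\<lambda>i. {i}) ` F)"
    proof (cases "i \<in> {x..c}")
      case True
      then have "orbit ?s i = orbit ?s x" using orbit_cyclic_eq3[OF cyc allin] by blast
      then show ?thesis using i by simp
    next
      case False
      then have "?s i = i" unfolding sig_def by auto
      then have "orbit ?s i = {i}" using orbit_eq_singleton_iff by metis
      then show ?thesis using i False F_def by auto
    qed
  qed
  have "num_cycles n ?s \<le> card (insert (orbit ?s x) ((\<lambda>i. {i}) ` F))"
    unfolding num_cycles_def by (rule card_mono) (use sub F_def in auto)
  also have "\<dots> \<le> Suc (card ((\<lambda>i. {i}) ` F))" by (rule card_insert_le_m1) auto
  also have "\<dots> \<le> Suc (card F)" using card_image_le[of F "\<lambda>i. {i}"] F_def by simp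
  also have "card F = n - (Suc c - x)"
  proof -
    have "{x..c} \<subseteq> {1..n}" using xd by auto
    then show ?thesis unfolding F_def by (simp add: card_Diff_subset)
  qed
  finally show ?thesis using xd by linarith
qed

lemma sig_gr1: "gr1 n d (sig x d c)"
proof -
  have g: "gr n d (sig x d c)"
  proof
    show "sig x d c permutes {1..n}" by (rule sig_perm[OF xd])
    show "d \<le> n" using xd by simp
    show "\<And>i. 1 \<le> i \<Longrightarrow> i < n \<Longrightarrow> i \<noteq> d \<Longrightarrow> sig x d c i < sig x d c (Suc i)"
      using H_of_desc[OF sig_perm[OF xd], of d] sig_desc[OF xd] by blast
  qed
  show ?thesis
  proof (rule gr1.intro[OF g])
    show "gr1_axioms n d (sig x d c)" unfolding gr1_axioms_def sig_def using xd by auto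
  qed
qed

lemma sig_shallow: "shallow n (sig x d c)"
proof -
  interpret g: gr1 n d "sig x d c" by (rule sig_gr1)
  have I: "inversions n (sig x d c) = c - x"
    using g.card_inv sig_rest[OF xd] xd unfolding inversions_def Inv_def sig_def by simp
  have T1: "n - num_cycles n (sig x d c) \<le> c - x"
    using g.T_bound xd unfolding sig_def by simp
  have T2: "c - x \<le> n - num_cycles n (sig x d c)" using sig_cyc xd by linarith
  show ?thesis unfolding shallow_def reflection_length_def using I T1 T2 g.G3 by simp
qed

end



definition Pr :: "nat \<Rightarrow> (nat \<times> nat) set" where
  "Pr n = {(x,d). 1 \<le> x \<and> x \<le> d \<and> d \<le> n}"

definition Tr :: "nat \<Rightarrow> (nat \<times> nat \<times> nat) set" where
  "Tr n = {(x,d,c). 1 \<le> x \<and> x \<le> d \<and> d < c \<and> c \<le> n}"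

lemma fin_Pr: "finite (Pr n)"
  by (rule finite_subset[of _ "{1..n} \<times> {1..n}"]) (auto simp: Pr_def)

lemma fin_Tr: "finite (Tr n)"
  by (rule finite_subset[of _ "{1..n} \<times> {1..n} \<times> {1..n}"]) (auto simp: Tr_def)

lemma card_Pr: "card (Pr n) = Suc n choose 2"
proof (induction n)
  case 0
  have "Pr 0 = {}" by (auto simp: Pr_def)
  then show ?case by simp
next
  case (Suc n)
  have e: "Pr (Suc n) = Pr n \<union> (\<lambda>x. (x, Suc n)) ` {1..Suc n}" by (auto simp: Pr_def)
  have dis: "Pr n \<inter> (\<lambda>x. (x, Suc n)) ` {1..Suc n} = {}" by (auto simp: Pr_def)
  have "card (Pr (Suc n)) = card (Pr n) + card ((\<lambda>x. (x, Suc n)) ` {1..Suc n})"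
    unfolding e by (rule card_Un_disjoint) (use fin_Pr dis in auto)
  also have "card ((\<lambda>x. (x, Suc n)) ` {1..Suc n}) = Suc n"
    by (subst card_image) (auto simp: inj_on_def)
  finally show ?case using Suc.IH by (simp add: numeral_2_eq_2)
qed

lemma card_Tr: "card (Tr n) = Suc n choose 3"
proof (induction n)
  case 0
  have "Tr 0 = {}" by (auto simp: Tr_def)
  then show ?case by simp
next
  case (Suc n)
  have e: "Tr (Suc n) = Tr n \<union> (\<lambda>(x,d). (x, d, Suc n)) ` Pr n"
  proof (rule set_eqI)
    fix z :: "nat \<times> nat \<times> nat"
    obtain a b c where z: "z = (a,b,c)" by (cases z) auto
    show "z \<in> Tr (Suc n) \<longleftrightarrow> z \<in> Tr n \<union> (\<lambda>(x,d). (x, d, Suc n)) ` Pr n"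
    proof
      assume "z \<in> Tr (Suc n)"
      then have h: "1 \<le> a" "a \<le> b" "b < c" "c \<le> Suc n" using z by (auto simp: Tr_def)
      show "z \<in> Tr n \<union> (\<lambda>(x,d). (x, d, Suc n)) ` Pr n"
      proof (cases "c = Suc n")
        case True
        then have "(a,b) \<in> Pr n" using h by (auto simp: Pr_def)
        then have "(a, b, Suc n) \<in> (\<lambda>(x,d). (x, d, Suc n)) ` Pr n" by force
        then show ?thesis using z True by simp
      next
        case False then show ?thesis using h z by (auto simp: Tr_def)
      qed
    next
      assume "z \<in> Tr n \<union> (\<lambda>(x,d). (x, d, Suc n)) ` Pr n"
      then show "z \<in> Tr (Suc n)" by (auto simp: Tr_def Pr_def)
    qed
  qed
  have dis: "Tr n \<inter> (\<lambda>(x,d). (x, d, Suc n)) ` Pr n = {}" by (auto simp: Tr_def)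
  have "card (Tr (Suc n)) = card (Tr n) + card ((\<lambda>(x,d). (x, d, Suc n)) ` Pr n)"
    unfolding e by (rule card_Un_disjoint) (use fin_Tr fin_Pr dis in auto)
  also have "card ((\<lambda>(x,d). (x, d, Suc n)) ` Pr n) = card (Pr n)"
    by (subst card_image) (auto simp: inj_on_def)
  finally show ?case using Suc.IH card_Pr[of n] by (simp add: numeral_3_eq_3 numeral_2_eq_2)
qed

lemma id_good: "(\<lambda>i. i) permutes {1..n} \<and> shallow n (\<lambda>i. i) \<and> grassmannian n (\<lambda>i. i)"
proof (intro conjI)
  show "(\<lambda>i. i) permutes {1..n}" using permutes_id[of "{1..n}"] unfolding id_def .
  have "inversions n (\<lambda>i. i) = card ({}::(nat\<times>nat) set)" unfolding inversions_def
    by (rule arg_cong[where f=card]) auto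
  then have I: "inversions n (\<lambda>i. i) = 0" by simp
  have D: "total_displacement n (\<lambda>i. i) = 0" unfolding total_displacement_def by simp
  have o: "\<And>x. orbit (\<lambda>i. i) x = {x}" using orbit_eq_singleton_iff[of "\<lambda>i. i"] by simp
  have "orbit (\<lambda>i. i) ` {1..n} = (\<lambda>i. {i}) ` {1..n}"
    by (rule image_cong) (simp_all add: o)
  then have "num_cycles n (\<lambda>i. i) = n" unfolding num_cycles_def
    by (simp add: card_image inj_on_def)
  then show "shallow n (\<lambda>i. i)" unfolding shallow_def reflection_length_def using I D by simp
  have "descents n (\<lambda>i. i) = {}" unfolding descents_def by auto
  then show "grassmannian n (\<lambda>i. i)" unfolding grassmannian_def by simp
qed

lemma sig_good:
  assumes "(x,d,c) \<in> Tr n"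
  shows "sig x d c permutes {1..n} \<and> shallow n (sig x d c) \<and> grassmannian n (sig x d c)"
proof -
  have xd: "1 \<le> x" "x \<le> d" "d < c" "c \<le> n" using assms by (auto simp: Tr_def)
  show ?thesis using sig_perm[OF xd] sig_shallow[OF xd] sig_desc[OF xd]
    unfolding grassmannian_def by simp
qed

lemma good_cases:
  assumes n2: "n \<ge> 2" and perm: "p permutes {1..n}" and sh: "shallow n p" and gm: "grassmannian n p"
  shows "p = (\<lambda>i. i) \<or> p \<in> (\<lambda>(x,d,c). sig x d c) ` Tr n"
proof -
  have fin: "finite (descents n p)"
    by (rule finite_subset[of _ "{1..n}"]) (auto simp: descents_def)
  have all: "\<forall>a\<in>descents n p. \<forall>b\<in>descents n p. a = b"
    using gm card_le_Suc0_iff_eq[OF fin] unfolding grassmannian_def by simp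
  show ?thesis
  proof (cases "descents n p = {}")
    case True
    have g1: "gr n n p"
      by (unfold_locales) (use perm H_of_desc[OF perm, of n] True in auto)
    have g2: "gr n 0 p"
      by (unfold_locales) (use perm H_of_desc[OF perm, of 0] True in auto)
    have "p i = i" for i
    proof (cases "i \<in> {1..n}")
      case True
      then have "i \<le> p i" using gr.G1(1)[OF g1, of i] by simp
      moreover have "p i \<le> i" using gr.G2(1)[OF g2, of i] True by simp
      ultimately show ?thesis by simp
    next
      case False then show ?thesis using permutes_not_in[OF perm False] by simp
    qed
    then show ?thesis by auto
  next
    case False
    then obtain k where k: "k \<in> descents n p" by auto
    then have dk: "descents n p \<subseteq> {k}" using all by auto
    have kk: "1 \<le> k" "k < n" "p (Suc k) < p k" using k n2 unfolding descents_def by auto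
    have g: "gr n k p"
      by (unfold_locales) (use perm H_of_desc[OF perm dk] kk in auto)
    have g1': "gr1 n k p"
    proof (rule gr1.intro[OF g])
      show "gr1_axioms n k p" unfolding gr1_axioms_def using kk by auto
    qed
    interpret g1: gr1 n k p by (rule g1')
    have "inversions n p + reflection_length n p = 2 * inversions n p"
      using sh g1.G3 unfolding shallow_def by simp
    then have "n - num_cycles n p = card (Inv n p)"
      unfolding reflection_length_def inversions_def Inv_def by simp
    then have "card (Rest n k p) = 0" using g1.card_inv g1.T_bound by simp
    moreover have "finite (Rest n k p)"
      by (rule finite_subset[of _ "{1..n} \<times> {1..n}"]) (auto simp: Rest_def)
    ultimately have R0: "Rest n k p = {}" by simp
    have "p = sig (p (Suc k)) k (p k)" by (rule ext) (rule g1.G7[OF R0])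
    moreover have "(p (Suc k), k, p k) \<in> Tr n"
      using g1.x1 g1.xk g1.kc g1.rng[of k] kk unfolding Tr_def by auto
    ultimately show ?thesis by force
  qed
qed

lemma sig_inj_Tr: "inj_on (\<lambda>(x,d,c). sig x d c) (Tr n)"
proof (rule inj_onI)
  fix a b assume a: "a \<in> Tr n" and b: "b \<in> Tr n" and e: "(\<lambda>(x,d,c). sig x d c) a = (\<lambda>(x,d,c). sig x d c) b"
  obtain x d c where a': "a = (x,d,c)" by (cases a) auto
  obtain x' d' c' where b': "b = (x',d',c')" by (cases b) auto
  have xd: "1 \<le> x" "x \<le> d" "d < c" "c \<le> n" using a a' by (auto simp: Tr_def)
  have xd': "1 \<le> x'" "x' \<le> d'" "d' < c'" "c' \<le> n" using b b' by (auto simp: Tr_def)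
  have s: "sig x d c = sig x' d' c'" using e a' b' by simp
  have "{d} = {d'}" using sig_desc[OF xd] sig_desc[OF xd'] s by simp
  then have dd: "d = d'" by simp
  have "c = c'" using fun_cong[OF s, of d] xd xd' dd unfolding sig_def by simp
  moreover have "x = x'" using fun_cong[OF s, of "Suc d"] xd xd' dd unfolding sig_def by simp
  ultimately show "a = b" using a' b' dd by simp
qed

theorem corollary6p4:
  fixes n :: nat
  assumes "n \<ge> 2"
  shows "card {p. p permutes {1..n} \<and> shallow n p \<and> grassmannian n p} = (n + 1 choose 3) + 1"
proof -
  have eq: "{p. p permutes {1..n} \<and> shallow n p \<and> grassmannian n p}
      = insert (\<lambda>i. i) ((\<lambda>(x,d,c). sig x d c) ` Tr n)"
  proof (rule set_eqI, rule iffI)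
    fix p assume "p \<in> {p. p permutes {1..n} \<and> shallow n p \<and> grassmannian n p}"
    then show "p \<in> insert (\<lambda>i. i) ((\<lambda>(x,d,c). sig x d c) ` Tr n)"
      using good_cases[OF assms] by auto
  next
    fix p assume "p \<in> insert (\<lambda>i. i) ((\<lambda>(x,d,c). sig x d c) ` Tr n)"
    then show "p \<in> {p. p permutes {1..n} \<and> shallow n p \<and> grassmannian n p}"
      using id_good sig_good by auto
  qed
  have notin: "(\<lambda>i. i) \<notin> (\<lambda>(x,d,c). sig x d c) ` Tr n"
  proof
    assume "(\<lambda>i. i) \<in> (\<lambda>(x,d,c). sig x d c) ` Tr n"
    then obtain x d c where t: "(x,d,c) \<in> Tr n" "(\<lambda>i. i) = sig x d c" by auto
    then have "d = sig x d c d" by metis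
    then show False using t(1) unfolding Tr_def sig_def by auto
  qed
  have "card (insert (\<lambda>i. i) ((\<lambda>(x,d,c). sig x d c) ` Tr n)) = Suc (card (Tr n))"
    using notin fin_Tr card_image[OF sig_inj_Tr] by simp
  then show ?thesis unfolding eq using card_Tr by simp
qed


end
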